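(* Let $n\ge2$, $r\ge1$, and let $V_1,\dots,V_r\in\mathrm{Mat}(n,\mathbb{C})$ satisfy $\operatorname{tr}(V_s^*V_m)=\delta_{sm}$. Define $$P_{\mathcal T}=\sum_{s=1}^r\sum_{a,b,c,d=1}^n (V_s)_{ab}(\bar V_s)_{cd}\,E^{(n)}_{ac}\otimes E^{(n)}_{bd}\in\mathrm{Mat}(n^2,\mathbb{C}),$$ $$A_{\mathcal T}=\sum_{s,m=1}^r E^{(r)}_{sm}\otimes\Big(\sum_{i=1}^r V_i\bar V_sV_m^tV_i^*\Big)\in\mathrm{Mat}(rn,\mathbb{C}).$$ Then for all integers $m\ge1$, $$\operatorname{tr}_3\big(((P_{\mathcal T})_1(P_{\mathcal T})_2)^m\big)=\operatorname{tr}\big(A_{\mathcal T}^m\big),$$ where $(P_{\mathcal T})_1=P_{\mathcal T}\otimes I_n$ and $(P_{\mathcal T})_2=I_n\otimes P_{\mathcal T}$.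
   Context: $E^{(p)}_{ab}\in\mathrm{Mat}(p,\mathbb{C})$ is the matrix unit with $(E^{(p)}_{ab})_{ij}=\delta_{ai}\delta_{bj}$; $\bar V$ is the entrywise complex conjugate, $V^t$ the transpose, $V^*$ the conjugate transpose; $\otimes$ is the Kronecker product; $\operatorname{tr}_3$ is the trace on $\mathrm{Mat}(n^3,\mathbb{C})$. (Such $P_{\mathcal T}$ is an orthogonal projection of rank $r$.) *)

theory Defs
  imports "Jordan_Normal_Form.Matrix"
begin

(* Matrices are JNF matrices; indices are 0-based (i.e. 1..n in the paper becomes 0..<n). *)

definition mtrace :: "complex mat \<Rightarrow> complex" where
  "mtrace A = (\<Sum>i<dim_row A. A $$ (i, i))"

definition mconj :: "complex mat \<Rightarrow> complex mat" where
  "mconj A = mat (dim_row A) (dim_col A) (\<lambda>ij. cnj (A $$ ij))"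

definition madj :: "complex mat \<Rightarrow> complex mat" where
  "madj A = transpose_mat (mconj A)"

definition kron :: "complex mat \<Rightarrow> complex mat \<Rightarrow> complex mat" where
  "kron A B = mat (dim_row A * dim_row B) (dim_col A * dim_col B)
     (\<lambda>(i, j). A $$ (i div dim_row B, j div dim_col B) * B $$ (i mod dim_row B, j mod dim_col B))"

definition munit :: "nat \<Rightarrow> nat \<Rightarrow> nat \<Rightarrow> complex mat" where
  "munit p a b = mat p p (\<lambda>(i, j). if i = a \<and> j = b then 1 else 0)"

definition msum :: "nat \<Rightarrow> nat \<Rightarrow> ('i \<Rightarrow> complex mat) \<Rightarrow> 'i set \<Rightarrow> complex mat" where
  "msum p q f S = mat p q (\<lambda>ij. \<Sum>s\<in>S. f s $$ ij)"

definition P_T :: "nat \<Rightarrow> nat \<Rightarrow> (nat \<Rightarrow> complex mat) \<Rightarrow> complex mat" where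
  "P_T n r V = msum (n * n) (n * n)
     (\<lambda>(s, a, b, c, d). ((V s $$ (a, b)) * (mconj (V s) $$ (c, d))) \<cdot>\<^sub>m
        kron (munit n a c) (munit n b d))
     ({..<r} \<times> {..<n} \<times> {..<n} \<times> {..<n} \<times> {..<n})"

definition A_T :: "nat \<Rightarrow> nat \<Rightarrow> (nat \<Rightarrow> complex mat) \<Rightarrow> complex mat" where
  "A_T n r V = msum (r * n) (r * n)
     (\<lambda>(s, m). kron (munit r s m)
        (msum n n (\<lambda>i. V i * mconj (V s) * transpose_mat (V m) * madj (V i)) {..<r}))
     ({..<r} \<times> {..<r})"

end

theory Submission
  imports Defs
begin


lemma mtrace_comm:
  assumes A: "A \<in> carrier_mat p q" and B: "B \<in> carrier_mat q p"
  shows "mtrace (A * B) = mtrace (B * A)"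
proof -
  have "mtrace (A * B) = (\<Sum>i<p. \<Sum>k<q. A $$ (i,k) * B $$ (k,i))"
    using A B by (simp add: mtrace_def scalar_prod_def row_def col_def lessThan_atLeast0)
  also have "\<dots> = (\<Sum>k<q. \<Sum>i<p. B $$ (k,i) * A $$ (i,k))"
    by (subst sum.swap) (simp add: mult.commute)
  also have "\<dots> = mtrace (B * A)"
    using A B by (simp add: mtrace_def scalar_prod_def row_def col_def lessThan_atLeast0)
  finally show ?thesis .
qed

lemma pow_split:
  assumes A: "A \<in> carrier_mat p q" and B: "B \<in> carrier_mat q p"
  shows "(A * B) ^\<^sub>m (Suc k) = A * ((B * A) ^\<^sub>m k * B)"
proof (induction k)
  case 0
  then show ?case using A B by simp
next
  case (Suc k)
  have BA: "(B * A) ^\<^sub>m k \<in> carrier_mat q q" using A B by simp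
  define M where "M = (B * A) ^\<^sub>m k * B"
  have M: "M \<in> carrier_mat q p" using BA B unfolding M_def by simp
  have "(A * B) ^\<^sub>m (Suc (Suc k)) = A * M * (A * B)"
    using Suc by (simp add: M_def)
  also have "\<dots> = A * (M * (A * B))"
    using assoc_mult_mat[OF A M mult_carrier_mat[OF A B]] .
  also have "M * (A * B) = M * A * B"
    using assoc_mult_mat[OF M A B] by simp
  also have "M * A = (B * A) ^\<^sub>m k * (B * A)"
    unfolding M_def using assoc_mult_mat[OF BA B A] .
  finally show ?case by simp
qed

lemma mtrace_pow_comm:
  assumes A: "A \<in> carrier_mat p q" and B: "B \<in> carrier_mat q p" and m: "m \<ge> 1"
  shows "mtrace ((A * B) ^\<^sub>m m) = mtrace ((B * A) ^\<^sub>m m)"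
proof -
  obtain k where k: "m = Suc k" using m by (cases m) auto
  have BA: "(B * A) ^\<^sub>m k \<in> carrier_mat q q" using A B by simp
  have "mtrace ((A * B) ^\<^sub>m m) = mtrace (A * ((B * A) ^\<^sub>m k * B))"
    using pow_split[OF A B] k by simp
  also have "\<dots> = mtrace (((B * A) ^\<^sub>m k * B) * A)"
    by (rule mtrace_comm[OF A]) (use BA B in auto)
  also have "\<dots> = mtrace ((B * A) ^\<^sub>m m)"
    using A B BA k by (simp add: assoc_mult_mat[OF BA B A])
  finally show ?thesis .
qed



lemma sum_if_const: "(\<Sum>x\<in>S. if P then f x else 0) = (if P then (\<Sum>x\<in>S. f x) else 0)"
  by simp

lemma if_conj_nest: "(if P \<and> Q then a else 0) = (if P then (if Q then a else 0) else 0)"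
  by simp

lemma sum_split:
  fixes a b :: nat
  shows "(\<Sum>i<a*b. f i) = (\<Sum>x<a. \<Sum>y<b. f (x*b+y)::'c::comm_monoid_add)"
proof (induction a)
  case 0 then show ?case by simp
next
  case (Suc a)
  have "{..<Suc a * b} = {..<a*b} \<union> {a*b..<a*b+b}" by auto
  then have "(\<Sum>i<Suc a * b. f i) = (\<Sum>i<a*b. f i) + (\<Sum>i\<in>{a*b..<a*b+b}. f i)"
    by (simp add: sum.union_disjoint ivl_disj_int)
  also have "(\<Sum>i\<in>{a*b..<a*b+b}. f i) = (\<Sum>y<b. f (a*b+y))"
    using sum.shift_bounds_nat_ivl[of f 0 "a*b" b] by (simp add: atLeast0LessThan add.commute)
  finally show ?case using Suc by simp
qed

lemma P_T_entry:
  assumes V: "\<forall>s<r. V s \<in> carrier_mat n n" and x: "x < n*n" and y: "y < n*n"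
  shows "P_T n r V $$ (x,y) = (\<Sum>s<r. V s $$ (x div n, x mod n) * cnj (V s $$ (y div n, y mod n)))"
proof -
  have n: "0 < n" using x by (cases n) auto
  have xd: "x div n < n" "y div n < n" using x y by (auto simp: less_mult_imp_div_less)
  have "P_T n r V $$ (x,y) = (\<Sum>(s,a,b,c,d)\<in>{..<r} \<times> {..<n} \<times> {..<n} \<times> {..<n} \<times> {..<n}.
      (if a = x div n \<and> c = y div n \<and> b = x mod n \<and> d = y mod n then V s $$ (a,b) * cnj (V s $$ (c,d)) else 0))"
    unfolding P_T_def msum_def using x y n xd V
    by (auto intro!: sum.cong simp: kron_def munit_def mconj_def)
  also have "\<dots> = (\<Sum>s<r. \<Sum>a<n. \<Sum>b<n. \<Sum>c<n. \<Sum>d<n.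
      (if a = x div n \<and> c = y div n \<and> b = x mod n \<and> d = y mod n then V s $$ (a,b) * cnj (V s $$ (c,d)) else 0))"
    by (simp add: sum.cartesian_product)
  also have "\<dots> = (\<Sum>s<r. V s $$ (x div n, x mod n) * cnj (V s $$ (y div n, y mod n)))"
    using xd n by (simp only: if_conj_nest sum_if_const) (simp add: sum.delta)
  finally show ?thesis .
qed


lemma madj_carrier: "A \<in> carrier_mat p q \<Longrightarrow> madj A \<in> carrier_mat q p"
  by (simp add: madj_def mconj_def)

lemma madj_entry: "i < dim_col A \<Longrightarrow> j < dim_row A \<Longrightarrow> madj A $$ (i,j) = cnj (A $$ (j,i))"
  by (simp add: madj_def mconj_def)

lemma madj_dims[simp]: "dim_row (madj A) = dim_col A" "dim_col (madj A) = dim_row A"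
  by (simp_all add: madj_def mconj_def)

definition Xm :: "nat \<Rightarrow> nat \<Rightarrow> (nat \<Rightarrow> complex mat) \<Rightarrow> complex mat" where
  "Xm n r V = mat (n*n*n) (r*n) (\<lambda>(i,q). if i mod n = q mod n
      then V (q div n) $$ (i div n div n, i div n mod n) else 0)"

definition Ym :: "nat \<Rightarrow> nat \<Rightarrow> (nat \<Rightarrow> complex mat) \<Rightarrow> complex mat" where
  "Ym n r V = mat (n*n*n) (r*n) (\<lambda>(i,q). if i div n div n = q mod n
      then V (q div n) $$ (i div n mod n, i mod n) else 0)"

lemma sum_rn:
  fixes r n :: nat
  shows "(\<Sum>q<r*n. f q) = (\<Sum>s<r. \<Sum>k<n. f (s*n+k) :: complex)"
  by (rule sum_split)

lemma divmod_simps[simp]: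
  fixes n s k :: nat
  assumes "k < n"
  shows "(s*n+k) div n = s" "(s*n+k) mod n = k"
  using assms by simp_all

lemma delta_prod:
  fixes a b :: complex and x y n :: nat
  shows "(\<Sum>k<n. (if x = k then a else 0) * cnj (if y = k then b else 0)) = (if x = y \<and> x < n then a * cnj b else 0)"
proof -
  have "(\<Sum>k<n. (if x = k then a else 0) * cnj (if y = k then b else 0))
      = (\<Sum>k<n. if k = x then (if y = x then a * cnj b else 0) else 0)"
    by (rule sum.cong) auto
  also have "\<dots> = (if x = y \<and> x < n then a * cnj b else 0)"
    by (simp add: sum.delta)
  finally show ?thesis .
qed

lemma idx_less: assumes "(x::nat) < r" "y < n" shows "x * n + y < r * n"
proof -
  have "x*n+y < Suc x * n" using assms by simp
  also have "\<dots> \<le> r*n" using assms by (intro mult_le_mono1) simp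
  finally show ?thesis .
qed

lemma P_T_dims[simp]: "dim_row (P_T n r V) = n*n" "dim_col (P_T n r V) = n*n"
  by (simp_all add: P_T_def msum_def)

lemma lemma_X:
  assumes V: "\<forall>s<r. V s \<in> carrier_mat n n"
  shows "kron (P_T n r V) (1\<^sub>m n) = Xm n r V * madj (Xm n r V)"
proof (rule eq_matI)
  show "dim_row (kron (P_T n r V) (1\<^sub>m n)) = dim_row (Xm n r V * madj (Xm n r V))"
    by (simp add: kron_def P_T_def msum_def Xm_def)
  show "dim_col (kron (P_T n r V) (1\<^sub>m n)) = dim_col (Xm n r V * madj (Xm n r V))"
    by (simp add: kron_def P_T_def msum_def Xm_def)
  fix i j assume "i < dim_row (Xm n r V * madj (Xm n r V))" "j < dim_col (Xm n r V * madj (Xm n r V))"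
  then have i: "i < n*n*n" and j: "j < n*n*n" by (simp_all add: Xm_def)
  have n: "0 < n" using i by (cases n) auto
  have id: "i div n < n*n" "j div n < n*n" using i j by (auto simp: less_mult_imp_div_less)
  have im: "i mod n < n" "j mod n < n" using n by auto
  have "kron (P_T n r V) (1\<^sub>m n) $$ (i,j) = P_T n r V $$ (i div n, j div n) * (if i mod n = j mod n then 1 else 0)"
    using i j id im by (simp add: kron_def)
  also have "\<dots> = (\<Sum>s<r. V s $$ (i div n div n, i div n mod n) * cnj (V s $$ (j div n div n, j div n mod n)))
       * (if i mod n = j mod n then 1 else 0)"
    using P_T_entry[OF V id] by simp
  also have "\<dots> = (\<Sum>s<r. \<Sum>k<n. (if i mod n = k then V s $$ (i div n div n, i div n mod n) else 0)
        * cnj (if j mod n = k then V s $$ (j div n div n, j div n mod n) else 0))"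
    using im by (simp add: delta_prod sum_distrib_right)
  also have "\<dots> = (\<Sum>q<r*n. Xm n r V $$ (i,q) * cnj (Xm n r V $$ (j,q)))"
    unfolding sum_rn using i j by (intro sum.cong refl) (simp add: Xm_def idx_less)
  also have "\<dots> = (Xm n r V * madj (Xm n r V)) $$ (i,j)"
    using i j by (simp add: Xm_def madj_entry scalar_prod_def row_def col_def lessThan_atLeast0[symmetric])
  finally show "kron (P_T n r V) (1\<^sub>m n) $$ (i,j) = (Xm n r V * madj (Xm n r V)) $$ (i,j)" .
qed


lemma nn_simps:
  fixes i n :: nat
  shows "i mod (n*n) div n = i div n mod n" "i mod (n*n) mod n = i mod n" "i div (n*n) = i div n div n"
proof -
  show "i mod (n*n) div n = i div n mod n"
    by (cases "n = 0") (simp_all add: mod_mult2_eq add.commute)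
qed (simp_all add: mod_mult2_eq div_mult2_eq)

lemma lemma_Y:
  assumes V: "\<forall>s<r. V s \<in> carrier_mat n n"
  shows "kron (1\<^sub>m n) (P_T n r V) = Ym n r V * madj (Ym n r V)"
proof (rule eq_matI)
  show "dim_row (kron (1\<^sub>m n) (P_T n r V)) = dim_row (Ym n r V * madj (Ym n r V))"
    by (simp add: kron_def Ym_def)
  show "dim_col (kron (1\<^sub>m n) (P_T n r V)) = dim_col (Ym n r V * madj (Ym n r V))"
    by (simp add: kron_def Ym_def)
  fix i j assume "i < dim_row (Ym n r V * madj (Ym n r V))" "j < dim_col (Ym n r V * madj (Ym n r V))"
  then have i: "i < n*n*n" and j: "j < n*n*n" by (simp_all add: Ym_def)
  have n: "0 < n" using i by (cases n) auto
  have id: "i mod (n*n) < n*n" "j mod (n*n) < n*n" using n by auto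
  have im: "i div n div n < n" "j div n div n < n" using i j
    by (auto simp: less_mult_imp_div_less div_mult2_eq[symmetric])
  have "kron (1\<^sub>m n) (P_T n r V) $$ (i,j) = (if i div n div n = j div n div n then 1 else 0) * P_T n r V $$ (i mod (n*n), j mod (n*n))"
    using i j id im by (simp add: kron_def nn_simps mult.assoc)
  also have "\<dots> = (if i div n div n = j div n div n then 1 else 0) *
       (\<Sum>s<r. V s $$ (i div n mod n, i mod n) * cnj (V s $$ (j div n mod n, j mod n)))"
    using P_T_entry[OF V id] by (simp add: nn_simps)
  also have "\<dots> = (\<Sum>s<r. \<Sum>k<n. (if i div n div n = k then V s $$ (i div n mod n, i mod n) else 0)
        * cnj (if j div n div n = k then V s $$ (j div n mod n, j mod n) else 0))"
    using im by (simp add: delta_prod sum_distrib_left)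
  also have "\<dots> = (\<Sum>q<r*n. Ym n r V $$ (i,q) * cnj (Ym n r V $$ (j,q)))"
    unfolding sum_rn using i j by (intro sum.cong refl) (simp add: Ym_def idx_less)
  also have "\<dots> = (Ym n r V * madj (Ym n r V)) $$ (i,j)"
    using i j by (simp add: Ym_def madj_entry scalar_prod_def row_def col_def lessThan_atLeast0[symmetric])
  finally show "kron (1\<^sub>m n) (P_T n r V) $$ (i,j) = (Ym n r V * madj (Ym n r V)) $$ (i,j)" .
qed

lemma sum_n3:
  fixes n :: nat
  shows "(\<Sum>i<n*n*n. f i) = (\<Sum>a<n. \<Sum>b<n. \<Sum>c<n. f ((a*n+b)*n+c) :: complex)"
  unfolding sum_split[where a="n*n" and b=n] sum_split[where a=n and b=n] by simp

lemma idx3_less: assumes "(a::nat) < n" "b < n" "c < n" shows "(a*n+b)*n+c < n*n*n"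
  using idx_less[OF idx_less[OF assms(1,2)] assms(3)] .

definition Kf :: "nat \<Rightarrow> nat \<Rightarrow> (nat \<Rightarrow> complex mat) \<Rightarrow> complex mat" where
  "Kf n r V = mat (r*n) (r*n) (\<lambda>(p,q). \<Sum>b<n. cnj (V (p div n) $$ (q mod n, b)) * V (q div n) $$ (b, p mod n))"

definition Lf :: "nat \<Rightarrow> nat \<Rightarrow> (nat \<Rightarrow> complex mat) \<Rightarrow> complex mat" where
  "Lf n r V = mat (r*n) (r*n) (\<lambda>(p,q). \<Sum>b<n. V (q div n) $$ (p mod n, b) * cnj (V (p div n) $$ (b, q mod n)))"

lemma lemma_K:
  "madj (Xm n r V) * Ym n r V = Kf n r V"
proof (rule eq_matI)
  show "dim_row (madj (Xm n r V) * Ym n r V) = dim_row (Kf n r V)" by (simp add: Xm_def Kf_def)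
  show "dim_col (madj (Xm n r V) * Ym n r V) = dim_col (Kf n r V)" by (simp add: Ym_def Kf_def)
  fix p q assume "p < dim_row (Kf n r V)" "q < dim_col (Kf n r V)"
  then have p: "p < r*n" and q: "q < r*n" by (simp_all add: Kf_def)
  have n: "0 < n" using p by (cases n) auto
  have pm: "p mod n < n" "q mod n < n" using n by auto
  have "(madj (Xm n r V) * Ym n r V) $$ (p,q) = (\<Sum>i<n*n*n. cnj (Xm n r V $$ (i,p)) * Ym n r V $$ (i,q))"
    using p q by (simp add: Xm_def Ym_def madj_entry scalar_prod_def row_def col_def lessThan_atLeast0[symmetric])
  also have "\<dots> = (\<Sum>a<n. \<Sum>b<n. \<Sum>c<n. if a = q mod n then (if c = p mod n then
        cnj (V (p div n) $$ (a, b)) * V (q div n) $$ (b, c) else 0) else 0)"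
    unfolding sum_n3 using p q by (intro sum.cong refl) (simp add: Xm_def Ym_def idx3_less)
  also have "\<dots> = Kf n r V $$ (p,q)"
    using p q pm by (simp add: Kf_def sum.delta sum.delta' sum_if_const)
  finally show "(madj (Xm n r V) * Ym n r V) $$ (p,q) = Kf n r V $$ (p,q)" .
qed

lemma lemma_L:
  "madj (Ym n r V) * Xm n r V = Lf n r V"
proof (rule eq_matI)
  show "dim_row (madj (Ym n r V) * Xm n r V) = dim_row (Lf n r V)" by (simp add: Ym_def Lf_def)
  show "dim_col (madj (Ym n r V) * Xm n r V) = dim_col (Lf n r V)" by (simp add: Xm_def Lf_def)
  fix p q assume "p < dim_row (Lf n r V)" "q < dim_col (Lf n r V)"
  then have p: "p < r*n" and q: "q < r*n" by (simp_all add: Lf_def)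
  have n: "0 < n" using p by (cases n) auto
  have pm: "p mod n < n" "q mod n < n" using n by auto
  have "(madj (Ym n r V) * Xm n r V) $$ (p,q) = (\<Sum>i<n*n*n. cnj (Ym n r V $$ (i,p)) * Xm n r V $$ (i,q))"
    using p q by (simp add: Xm_def Ym_def madj_entry scalar_prod_def row_def col_def lessThan_atLeast0[symmetric])
  also have "\<dots> = (\<Sum>a<n. \<Sum>b<n. \<Sum>c<n. if a = p mod n then (if c = q mod n then
        V (q div n) $$ (a, b) * cnj (V (p div n) $$ (b, c)) else 0) else 0)"
    unfolding sum_n3 using p q by (intro sum.cong refl) (auto simp: Xm_def Ym_def idx3_less)
  also have "\<dots> = Lf n r V $$ (p,q)"
    using p q pm by (simp add: Lf_def sum.delta sum.delta' sum_if_const)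
  finally show "(madj (Ym n r V) * Xm n r V) $$ (p,q) = Lf n r V $$ (p,q)" .
qed


lemma swap3: "(\<Sum>x\<in>A. \<Sum>y\<in>B. \<Sum>z\<in>C. f x y z) = (\<Sum>y\<in>B. \<Sum>z\<in>C. \<Sum>x\<in>A. f x y z)"
  by (rule trans[OF sum.swap]) (rule sum.cong[OF refl], rule sum.swap)

lemma prod4:
  assumes "A \<in> carrier_mat n n" "B \<in> carrier_mat n n" "C \<in> carrier_mat n n" "D \<in> carrier_mat n n"
    and "a < n" "b < n"
  shows "(A * B * C * D) $$ (a,b) = (\<Sum>c'<n. \<Sum>c<n. \<Sum>k<n. A $$ (a,c) * B $$ (c,k) * C $$ (k,c') * D $$ (c',b))"
  using assms by (simp add: scalar_prod_def row_def col_def lessThan_atLeast0[symmetric] sum_distrib_right sum_distrib_left mult.assoc)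

lemma if01_mult: "(if P then 1 else 0) * (x::complex) = (if P then x else 0)"
  by simp

lemma A_T_entry:
  assumes V: "\<forall>s<r. V s \<in> carrier_mat n n" and p: "p < r*n" and q: "q < r*n"
  shows "A_T n r V $$ (p,q) = (\<Sum>i<r. \<Sum>c'<n. \<Sum>c<n. \<Sum>k<n. V i $$ (p mod n, c) * cnj (V (p div n) $$ (c,k))
      * V (q div n) $$ (c', k) * cnj (V i $$ (q mod n, c')))"
proof -
  have n: "0 < n" using p by (cases n) auto
  have pm: "p mod n < n" "q mod n < n" using n by auto
  have pd: "p div n < r" "q div n < r" using p q by (auto simp: less_mult_imp_div_less)
  let ?M = "\<lambda>s m. msum n n (\<lambda>i. V i * mconj (V s) * transpose_mat (V m) * madj (V i)) {..<r}"
  have "A_T n r V $$ (p,q) = (\<Sum>(s,m)\<in>{..<r}\<times>{..<r}. (if s = p div n \<and> m = q div n then 1 else 0) * ?M s m $$ (p mod n, q mod n))"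
    unfolding A_T_def msum_def using p q pm pd by (auto intro!: sum.cong simp: kron_def munit_def)
  also have "\<dots> = ?M (p div n) (q div n) $$ (p mod n, q mod n)"
    unfolding sum.cartesian_product[symmetric]
  proof -
    have "(\<Sum>x<r. \<Sum>m<r. (if x = p div n \<and> m = q div n then 1 else 0) * ?M x m $$ (p mod n, q mod n))
      = (\<Sum>x<r. \<Sum>m<r. if x = p div n then (if m = q div n then ?M x m $$ (p mod n, q mod n) else 0) else 0)"
      by (intro sum.cong refl) simp
    also have "\<dots> = ?M (p div n) (q div n) $$ (p mod n, q mod n)"
      using pd by (simp only: sum_if_const) (simp add: sum.delta)
    finally show "(\<Sum>x<r. \<Sum>m<r. (if x = p div n \<and> m = q div n then 1 else 0) * ?M x m $$ (p mod n, q mod n))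
      = ?M (p div n) (q div n) $$ (p mod n, q mod n)" .
  qed
  also have "\<dots> = (\<Sum>i<r. (V i * mconj (V (p div n)) * transpose_mat (V (q div n)) * madj (V i)) $$ (p mod n, q mod n))"
    using pm by (simp add: msum_def)
  also have "\<dots> = (\<Sum>i<r. \<Sum>c'<n. \<Sum>c<n. \<Sum>k<n. V i $$ (p mod n, c) * cnj (V (p div n) $$ (c,k))
      * V (q div n) $$ (c', k) * cnj (V i $$ (q mod n, c')))"
  proof (rule sum.cong[OF refl])
    fix i assume "i \<in> {..<r}"
    then have Vi: "V i \<in> carrier_mat n n" using V by auto
    have Vp: "V (p div n) \<in> carrier_mat n n" "V (q div n) \<in> carrier_mat n n" using V pd by auto
    have c: "mconj (V (p div n)) \<in> carrier_mat n n" "transpose_mat (V (q div n)) \<in> carrier_mat n n"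
      "madj (V i) \<in> carrier_mat n n"
      using Vp Vi by (auto simp: mconj_def madj_def)
    show "(V i * mconj (V (p div n)) * transpose_mat (V (q div n)) * madj (V i)) $$ (p mod n, q mod n) =
      (\<Sum>c'<n. \<Sum>c<n. \<Sum>k<n. V i $$ (p mod n, c) * cnj (V (p div n) $$ (c,k))
      * V (q div n) $$ (c', k) * cnj (V i $$ (q mod n, c')))"
      unfolding prod4[OF Vi c(1) c(2) c(3) pm]
      using Vi Vp pm by (intro sum.cong refl) (simp add: mconj_def madj_def)
  qed
  finally show ?thesis .
qed



lemma LK_term:
  assumes p: "p < r*n" and q: "q < r*n" and s: "s < r" and k: "k < n"
  shows "Lf n r V $$ (p, s*n+k) * Kf n r V $$ (s*n+k, q) = (\<Sum>c<n. \<Sum>c'<n. V s $$ (p mod n, c) * cnj (V (p div n) $$ (c,k))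
      * V (q div n) $$ (c', k) * cnj (V s $$ (q mod n, c')))"
proof -
  have i: "s*n+k < r*n" using idx_less[OF s k] .
  have L: "Lf n r V $$ (p, s*n+k) = (\<Sum>c<n. V s $$ (p mod n, c) * cnj (V (p div n) $$ (c,k)))"
    using p i k by (simp add: Lf_def)
  have K: "Kf n r V $$ (s*n+k, q) = (\<Sum>c'<n. cnj (V s $$ (q mod n, c')) * V (q div n) $$ (c', k))"
    using q i k by (simp add: Kf_def)
  show ?thesis
    unfolding L K sum_product by (intro sum.cong refl) (simp add: mult_ac)
qed

lemma lemma_LK:
  assumes V: "\<forall>s<r. V s \<in> carrier_mat n n"
  shows "Lf n r V * Kf n r V = A_T n r V"
proof (rule eq_matI)
  show "dim_row (Lf n r V * Kf n r V) = dim_row (A_T n r V)" by (simp add: Lf_def A_T_def msum_def)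
  show "dim_col (Lf n r V * Kf n r V) = dim_col (A_T n r V)" by (simp add: Kf_def A_T_def msum_def)
  fix p q assume "p < dim_row (A_T n r V)" "q < dim_col (A_T n r V)"
  then have p: "p < r*n" and q: "q < r*n" by (simp_all add: A_T_def msum_def)
  have "(Lf n r V * Kf n r V) $$ (p,q) = (\<Sum>q'<r*n. Lf n r V $$ (p,q') * Kf n r V $$ (q',q))"
    using p q by (simp add: Lf_def Kf_def scalar_prod_def row_def col_def lessThan_atLeast0[symmetric])
  also have "\<dots> = (\<Sum>s<r. \<Sum>k<n. \<Sum>c<n. \<Sum>c'<n. V s $$ (p mod n, c) * cnj (V (p div n) $$ (c,k))
      * V (q div n) $$ (c', k) * cnj (V s $$ (q mod n, c')))"
    unfolding sum_rn
  proof (rule sum.cong[OF refl], rule sum.cong[OF refl])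
    fix s k assume s: "s \<in> {..<r}" and k: "k \<in> {..<n}"
    show "Lf n r V $$ (p, s*n+k) * Kf n r V $$ (s*n+k, q) = (\<Sum>c<n. \<Sum>c'<n. V s $$ (p mod n, c) * cnj (V (p div n) $$ (c,k))
      * V (q div n) $$ (c', k) * cnj (V s $$ (q mod n, c')))"
      using LK_term[OF p q] s k by blast
  qed
  also have "\<dots> = (\<Sum>s<r. \<Sum>c'<n. \<Sum>c<n. \<Sum>k<n. V s $$ (p mod n, c) * cnj (V (p div n) $$ (c,k))
      * V (q div n) $$ (c', k) * cnj (V s $$ (q mod n, c')))"
  proof (rule sum.cong[OF refl])
    fix s
    show "(\<Sum>k<n. \<Sum>c<n. \<Sum>c'<n. V s $$ (p mod n, c) * cnj (V (p div n) $$ (c,k))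
      * V (q div n) $$ (c', k) * cnj (V s $$ (q mod n, c'))) =
      (\<Sum>c'<n. \<Sum>c<n. \<Sum>k<n. V s $$ (p mod n, c) * cnj (V (p div n) $$ (c,k))
      * V (q div n) $$ (c', k) * cnj (V s $$ (q mod n, c')))"
      by (rule trans[OF sum.swap swap3[symmetric]])
  qed
  also have "\<dots> = A_T n r V $$ (p,q)"
    by (rule A_T_entry[OF V p q, symmetric])
  finally show "(Lf n r V * Kf n r V) $$ (p,q) = A_T n r V $$ (p,q)" .
qed


theorem lemma5:
  fixes n r :: nat and V :: "nat \<Rightarrow> complex mat" and m :: nat
  assumes "n \<ge> 2" and "r \<ge> 1"
    and "\<forall>s<r. V s \<in> carrier_mat n n"
    and "\<forall>s<r. \<forall>t<r. mtrace (madj (V s) * V t) = (if s = t then 1 else 0)"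
    and "m \<ge> 1"
  shows "mtrace ((kron (P_T n r V) (1\<^sub>m n) * kron (1\<^sub>m n) (P_T n r V)) ^\<^sub>m m)
         = mtrace (A_T n r V ^\<^sub>m m)"
proof -
  note V = assms(3)
  define X where "X = Xm n r V"
  define Y where "Y = Ym n r V"
  have cX: "X \<in> carrier_mat (n*n*n) (r*n)" by (simp add: X_def Xm_def)
  have cY: "Y \<in> carrier_mat (n*n*n) (r*n)" by (simp add: Y_def Ym_def)
  have cX': "madj X \<in> carrier_mat (r*n) (n*n*n)" using madj_carrier[OF cX] .
  have cY': "madj Y \<in> carrier_mat (r*n) (n*n*n)" using madj_carrier[OF cY] .
  have cYY: "Y * madj Y \<in> carrier_mat (n*n*n) (n*n*n)" using cY cY' by simp
  define Z where "Z = madj X * (Y * madj Y)"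
  have cZ: "Z \<in> carrier_mat (r*n) (n*n*n)" unfolding Z_def using cX' cYY by simp
  have cK: "Kf n r V \<in> carrier_mat (r*n) (r*n)" by (simp add: Kf_def)
  have cL: "Lf n r V \<in> carrier_mat (r*n) (r*n)" by (simp add: Lf_def)
  have G: "kron (P_T n r V) (1\<^sub>m n) * kron (1\<^sub>m n) (P_T n r V) = X * Z"
    unfolding lemma_X[OF V] lemma_Y[OF V] X_def[symmetric] Y_def[symmetric] Z_def
    using assoc_mult_mat[OF cX cX' cYY] .
  have ZX: "Z * X = Kf n r V * Lf n r V"
  proof -
    have "Z * X = madj X * (Y * madj Y * X)"
      unfolding Z_def using assoc_mult_mat[OF cX' cYY cX] .
    also have "Y * madj Y * X = Y * (madj Y * X)"
      using assoc_mult_mat[OF cY cY' cX] .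
    also have "madj X * (Y * (madj Y * X)) = madj X * Y * (madj Y * X)"
      using assoc_mult_mat[OF cX' cY mult_carrier_mat[OF cY' cX]] by simp
    finally show ?thesis
      unfolding X_def Y_def lemma_K lemma_L .
  qed
  have "mtrace ((kron (P_T n r V) (1\<^sub>m n) * kron (1\<^sub>m n) (P_T n r V)) ^\<^sub>m m)
      = mtrace ((Z * X) ^\<^sub>m m)"
    unfolding G by (rule mtrace_pow_comm[OF cX cZ assms(5)])
  also have "\<dots> = mtrace ((Lf n r V * Kf n r V) ^\<^sub>m m)"
    unfolding ZX by (rule mtrace_pow_comm[OF cK cL assms(5)])
  also have "\<dots> = mtrace (A_T n r V ^\<^sub>m m)"
    unfolding lemma_LK[OF V] ..
  finally show ?thesis .
qed

end
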